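(* Let $(a_i)_{i\ge1}$ be a sequence of mild signature, let $(b_i)_{i\ge1}$ be any sequence of integers, and let $A$ be the associated replacement sequence. If $\alpha$ is a real number with $\sum_{i\ge1}\|\alpha b_i\|<\infty$, then the sequence of Weyl sums $x_n=\frac1n\sum_{i=0}^{n-1}e(\alpha A(i))$ converges to some complex number as $n\to\infty$.
   Context: $e(x)=e^{2\pi i x}$ and $\|x\|$ is the distance from $x$ to the nearest integer. Greedy representation: given an increasing sequence of positive integers $(a_i)$ with $a_1=1$, the base-$a_i$ representation of $n\ge0$ is obtained by repeatedly subtracting from what remains the largest $a_i$ that is at most what remains (the same $a_i$ may be used more than once), until $0$ is reached; this writes $n$ as a sum of terms $a_i$ with multiplicities. Mild signature: $(a_i)$ is an increasing sequence of positive integers with $a_1=1$ such that (1) there is a constant $L$ such that for every $n$, greedily writing $a_n$ as a sum of terms among $a_1,\dots,a_{n-1}$ (repeatedly subtracting the largest $a_i$ with $i\le n-1$ that is at most what remains) uses only $a_{n-1},\dots,a_{n-L}$, giving $a_n=c_1a_{n-1}+\dots+c_La_{n-L}$ with integers $c_j\ge0$ (which may depend on $n$); and (2) there are $r,s>1$ with $ra_n<a_{n+1}<sa_n$ for all $n$. Replacement sequence: $A(n)$ is obtained by writing $n$ in its greedy base-$a_i$ representation and replacing each occurrence of $a_i$ by $b_i$, i.e. if $n=\sum_i m_ia_i$ greedily then $A(n)=\sum_i m_ib_i$ (so $A(0)=0$). *)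

theory Defs
  imports "HOL-Analysis.Analysis"
begin

text \<open>Sequences are indexed from 1: only the values a 1, a 2, ... matter.\<close>

definition greedy_set :: "(nat \<Rightarrow> nat) \<Rightarrow> nat \<Rightarrow> nat \<Rightarrow> nat set" where
  "greedy_set a N m = {i \<in> {1..N}. 0 < a i \<and> a i \<le> m}"

function greedy_list :: "(nat \<Rightarrow> nat) \<Rightarrow> nat \<Rightarrow> nat \<Rightarrow> nat list" where
  "greedy_list a N m =
     (if greedy_set a N m = {} then []
      else let i = Max (greedy_set a N m) in i # greedy_list a N (m - a i))"
  by pat_completeness auto
termination
proof (relation "Wellfounded.measure (\<lambda>(a, N, m). m)")
  fix a N m i
  assume ne: "greedy_set a N m \<noteq> {}" and i: "i = Max (greedy_set a N m)"
  have "finite (greedy_set a N m)" unfolding greedy_set_def by auto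
  then have "i \<in> greedy_set a N m" using ne i Max_in by blast
  then have "0 < a i" "a i \<le> m" unfolding greedy_set_def by auto
  then show "((a, N, m - a i), a, N, m) \<in> Wellfounded.measure (\<lambda>(a, N, m). m)" by simp
qed simp

text \<open>Greedy base-(a_i) representation of n \<ge> 0 (indices used). Since a is increasing
  with a 1 = 1, every i with a i \<le> n satisfies i \<le> n, so the bound N = n is harmless.\<close>
definition base_rep :: "(nat \<Rightarrow> nat) \<Rightarrow> nat \<Rightarrow> nat list" where
  "base_rep a n = greedy_list a n n"

definition replacement :: "(nat \<Rightarrow> nat) \<Rightarrow> (nat \<Rightarrow> int) \<Rightarrow> nat \<Rightarrow> int" where
  "replacement a b n = sum_list (map b (base_rep a n))"

definition mild_signature :: "(nat \<Rightarrow> nat) \<Rightarrow> bool" where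
  "mild_signature a \<longleftrightarrow>
     a 1 = 1 \<and> strict_mono_on {1..} a \<and>
     (\<exists>L::nat. \<forall>n\<ge>2. set (greedy_list a (n - 1) (a n)) \<subseteq> {n - L..n - 1}) \<and>
     (\<exists>r s::real. r > 1 \<and> s > 1 \<and>
        (\<forall>n\<ge>1. r * real (a n) < real (a (Suc n)) \<and> real (a (Suc n)) < s * real (a n)))"

definition ee :: "real \<Rightarrow> complex" where
  "ee x = exp (2 * of_real pi * \<i> * of_real x)"

definition dist_int :: "real \<Rightarrow> real" where
  "dist_int x = \<bar>x - of_int (round x)\<bar>"

end

theory Submission
  imports Defs "HOL-Analysis.Analysis"
begin



declare greedy_list.simps[simp del]

lemma ee_add: "ee (x + y) = ee x * ee y"
  unfolding ee_def by (simp add: distrib_left distrib_right exp_add mult.assoc)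

lemma ee_int: "ee (of_int k) = 1"
proof -
  have "ee (of_int k) = exp ((2 * of_int k * pi) * \<i>)"
    unfolding ee_def by (simp add: mult_ac)
  also have "\<dots> = 1" by (rule exp_integer_2pi) simp
  finally show ?thesis .
qed

lemma norm_ee [simp]: "norm (ee x) = 1"
proof -
  have "ee x = exp (\<i> * of_real (2 * pi * x))" unfolding ee_def by (simp add: mult_ac)
  then show ?thesis by simp
qed

lemma ee_minus_1: "norm (ee x - 1) \<le> 2 * pi * dist_int x"
proof -
  define \<theta> where "\<theta> = x - of_int (round x)"
  have "ee x = ee (\<theta> + of_int (round x))" by (simp add: \<theta>_def)
  also have "\<dots> = ee \<theta>" by (simp add: ee_add ee_int)
  finally have e: "ee x = ee \<theta>" .
  have e2: "ee \<theta> = exp (\<i> * of_real (2 * pi * \<theta>))" unfolding ee_def by (simp add: mult_ac)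
  have "norm (ee \<theta> - 1) = 2 * \<bar>sin (2 * pi * \<theta> / 2)\<bar>" unfolding e2 by (rule dist_exp_i_1)
  also have "\<dots> \<le> 2 * \<bar>2 * pi * \<theta> / 2\<bar>" using abs_sin_x_le_abs_x by simp
  also have "\<dots> = 2 * pi * \<bar>\<theta>\<bar>" by (simp add: abs_mult)
  finally show ?thesis using e by (simp add: dist_int_def \<theta>_def)
qed

lemma dist_int_nonneg: "dist_int x \<ge> 0" by (simp add: dist_int_def)

locale incr =
  fixes a :: "nat \<Rightarrow> nat"
  assumes a1: "a 1 = 1" and smono: "strict_mono_on {1..} a"
begin

lemma a_less: "1 \<le> i \<Longrightarrow> i < j \<Longrightarrow> a i < a j"
  using smono by (auto simp: strict_mono_on_def)

lemma a_le: "1 \<le> i \<Longrightarrow> i \<le> j \<Longrightarrow> a i \<le> a j"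
  using a_less by (metis order_le_less)

lemma a_ge: "1 \<le> i \<Longrightarrow> i \<le> a i"
proof (induction i rule: dec_induct[of 1])
  case base then show ?case using a1 by simp
next
  case (step n) then show ?case using a_less[of n "Suc n"] by simp
qed

lemma a_pos: "1 \<le> i \<Longrightarrow> 0 < a i" using a_ge by fastforce

lemma a_mono_iff: "1 \<le> i \<Longrightarrow> 1 \<le> j \<Longrightarrow> a i \<le> a j \<longleftrightarrow> i \<le> j"
  using a_le a_less by (meson leD le_less_linear)

lemma top_exists:
  assumes "1 \<le> M" shows "\<exists>k\<ge>1. a k \<le> M \<and> M < a (Suc k)"
proof -
  define S where "S = {k. 1 \<le> k \<and> a k \<le> M}"
  have "S \<subseteq> {..M}"
  proof
    fix k assume "k \<in> S"
    then have "1 \<le> k" "a k \<le> M" by (auto simp: S_def)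
    then show "k \<in> {..M}" using a_ge[of k] by simp
  qed
  then have fin: "finite S" using finite_subset by blast
  have "1 \<in> S" using assms a1 by (simp add: S_def)
  define k where "k = Max S"
  have "k \<in> S" using fin \<open>1 \<in> S\<close> k_def Max_in by auto
  moreover have "M < a (Suc k)"
  proof (rule ccontr)
    assume "\<not> ?thesis"
    then have "Suc k \<in> S" unfolding S_def by auto
    then have "Suc k \<le> k" using Max_ge[OF fin] k_def by blast
    then show False by simp
  qed
  ultimately show ?thesis unfolding S_def by auto
qed

lemma greedy_set_eq: "m \<le> N \<Longrightarrow> greedy_set a N m = {i. 1 \<le> i \<and> a i \<le> m}"
  unfolding greedy_set_def using a_ge a_pos by (auto, meson le_trans)

lemma greedy_list_indep:
  "m \<le> N \<Longrightarrow> m \<le> N' \<Longrightarrow> greedy_list a N m = greedy_list a N' m"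
proof (induction m arbitrary: N N' rule: less_induct)
  case (less m)
  have gs: "greedy_set a N m = greedy_set a N' m" using less.prems greedy_set_eq by simp
  show ?case
  proof (cases "greedy_set a N m = {}")
    case True
    have "greedy_list a N m = []" by (subst greedy_list.simps) (use True in simp)
    moreover have "greedy_list a N' m = []" by (subst greedy_list.simps) (use True gs in simp)
    ultimately show ?thesis by simp
  next
    case False
    define k where "k = Max (greedy_set a N m)"
    have fin: "finite (greedy_set a N m)" unfolding greedy_set_def by auto
    have "k \<in> greedy_set a N m" using Max_in[OF fin False] k_def by simp
    then have k: "1 \<le> k" "a k \<le> m" "0 < a k" unfolding greedy_set_def by auto
    have "greedy_list a N (m - a k) = greedy_list a N' (m - a k)"
      by (rule less.IH[of "m - a k" N N']) (use k less.prems in auto)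
    moreover have "greedy_list a N m = k # greedy_list a N (m - a k)"
      by (subst greedy_list.simps) (use False in \<open>simp add: k_def Let_def\<close>)
    moreover have "greedy_list a N' m = k # greedy_list a N' (m - a k)"
      by (subst greedy_list.simps) (use False gs in \<open>simp add: k_def Let_def\<close>)
    ultimately show ?thesis by (simp only:)
  qed
qed


lemma repl_step:
  assumes k: "1 \<le> k" "a k \<le> n" "n < a (Suc k)"
  shows "replacement a b n = b k + replacement a b (n - a k)"
proof -
  have gs: "greedy_set a n n = {i. 1 \<le> i \<and> a i \<le> n}" using greedy_set_eq by simp
  have fin: "finite (greedy_set a n n)" unfolding greedy_set_def by auto
  have kin: "k \<in> greedy_set a n n" using gs k by simp
  have "\<forall>i\<in>greedy_set a n n. i \<le> k"
  proof
    fix i assume "i \<in> greedy_set a n n"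
    then have "1 \<le> i" "a i < a (Suc k)" using gs k by auto
    then show "i \<le> k" using a_mono_iff[of "Suc k" i] k by simp
  qed
  then have mx: "Max (greedy_set a n n) = k" using kin fin by (meson Max_eqI)
  have "greedy_list a n n = k # greedy_list a n (n - a k)"
    by (subst greedy_list.simps) (use kin mx in \<open>auto simp: Let_def\<close>)
  moreover have "greedy_list a n (n - a k) = greedy_list a (n - a k) (n - a k)"
    by (rule greedy_list_indep) auto
  ultimately show ?thesis unfolding replacement_def base_rep_def by simp
qed

lemma repl_0: "replacement a b 0 = 0"
proof -
  have "greedy_set a 0 0 = {}" unfolding greedy_set_def by auto
  then show ?thesis unfolding replacement_def base_rep_def by (subst greedy_list.simps) simp
qed

end

locale wset = incr a for a :: "nat \<Rightarrow> nat" +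
  fixes b :: "nat \<Rightarrow> int" and \<alpha> :: real
begin

definition f :: "nat \<Rightarrow> complex" where "f n = ee (\<alpha> * of_int (replacement a b n))"
definition F :: "nat \<Rightarrow> complex" where "F m = (\<Sum>n<m. f n)"

lemma norm_F: "norm (F m) \<le> real m"
proof -
  have "norm (F m) \<le> (\<Sum>n<m. norm (f n))" unfolding F_def by (rule norm_sum)
  also have "\<dots> = real m" by (simp add: f_def)
  finally show ?thesis .
qed

lemma F_split:
  assumes k: "1 \<le> k" "a k \<le> M" "M \<le> a (Suc k)"
  shows "F M = F (a k) + ee (\<alpha> * of_int (b k)) * F (M - a k)"
proof -
  have "F M = (\<Sum>n<a k. f n) + (\<Sum>n\<in>{a k..<M}. f n)"
    unfolding F_def using k by (metis atLeast0LessThan le0 sum.atLeastLessThan_concat)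
  also have "(\<Sum>n\<in>{a k..<M}. f n) = (\<Sum>u<M - a k. f (u + a k))"
    by (rule sum.reindex_bij_witness[of _ "\<lambda>u. u + a k" "\<lambda>n. n - a k"]) (use k in auto)
  also have "\<dots> = (\<Sum>u<M - a k. ee (\<alpha> * of_int (b k)) * f u)"
  proof (rule sum.cong[OF refl])
    fix u assume "u \<in> {..<M - a k}"
    then have u: "a k \<le> u + a k" "u + a k < a (Suc k)" using k by auto
    have "replacement a b (u + a k) = b k + replacement a b u" using repl_step[OF k(1) u] by simp
    then show "f (u + a k) = ee (\<alpha> * of_int (b k)) * f u"
      unfolding f_def by (simp add: distrib_left ee_add)
  qed
  also have "\<dots> = ee (\<alpha> * of_int (b k)) * F (M - a k)" unfolding F_def by (simp add: sum_distrib_left)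
  finally show ?thesis unfolding F_def by simp
qed

primrec wsum :: "nat list \<Rightarrow> complex" where
  "wsum [] = 0"
| "wsum (k # ks) = F (a k) + ee (\<alpha> * of_int (b k)) * wsum ks"

lemma greedy_wsum:
  assumes "1 \<le> N" "m \<le> a (Suc N)"
  shows "F m = wsum (greedy_list a N m) \<and> sum_list (map a (greedy_list a N m)) = m
     \<and> set (greedy_list a N m) \<subseteq> {1..N}"
  using assms(2)
proof (induction m rule: less_induct)
  case (less m)
  show ?case
  proof (cases "greedy_set a N m = {}")
    case True
    have "m = 0"
    proof (rule ccontr)
      assume "m \<noteq> 0"
      then have "1 \<in> greedy_set a N m" using assms(1) a1 unfolding greedy_set_def by auto
      then show False using True by simp
    qed
    moreover have "greedy_list a N m = []" by (subst greedy_list.simps) (use True in simp)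
    ultimately show ?thesis by (simp add: F_def)
  next
    case False
    define k where "k = Max (greedy_set a N m)"
    have fin: "finite (greedy_set a N m)" unfolding greedy_set_def by auto
    have "k \<in> greedy_set a N m" using Max_in[OF fin False] k_def by simp
    then have k: "1 \<le> k" "a k \<le> m" "0 < a k" "k \<le> N" unfolding greedy_set_def by auto
    have up: "m \<le> a (Suc k)"
    proof (cases "k = N")
      case True then show ?thesis using less.prems by simp
    next
      case False
      show ?thesis
      proof (rule ccontr)
        assume "\<not> ?thesis"
        then have "Suc k \<in> greedy_set a N m" using False k a_pos[of "Suc k"] unfolding greedy_set_def by auto
        then have "Suc k \<le> k" using Max_ge[OF fin] k_def by blast
        then show False by simp
      qed
    qed
    have IH: "F (m - a k) = wsum (greedy_list a N (m - a k)) \<and> sum_list (map a (greedy_list a N (m - a k))) = m - a k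
       \<and> set (greedy_list a N (m - a k)) \<subseteq> {1..N}"
    proof (rule less.IH)
      show "m - a k < m" using k by simp
      show "m - a k \<le> a (Suc N)" using less.prems by simp
    qed
    have gl: "greedy_list a N m = k # greedy_list a N (m - a k)"
      by (subst greedy_list.simps) (use False in \<open>simp add: k_def Let_def\<close>)
    define gl' where "gl' = greedy_list a N (m - a k)"
    have "F m = wsum (k # gl')"
      using F_split[OF k(1,2) up] IH unfolding gl'_def wsum.simps by simp
    moreover have "sum_list (map a (k # gl')) = m" using IH k unfolding gl'_def by simp
    moreover have "set (k # gl') \<subseteq> {1..N}" using IH k unfolding gl'_def by simp
    ultimately show ?thesis unfolding gl gl'_def by blast
  qed
qed

end



locale crec =
  fixes x e :: "nat \<Rightarrow> real" and w :: "nat \<Rightarrow> nat \<Rightarrow> real" and L i0 :: nat and \<delta> B :: real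
  assumes L1: "L \<ge> 1" and i0L: "i0 \<ge> L" and dpos: "0 < \<delta>" and d1: "\<delta> \<le> 1"
    and wnn: "\<And>i j. i \<ge> i0 \<Longrightarrow> j \<in> {1..L} \<Longrightarrow> 0 \<le> w i j"
    and wsum1: "\<And>i. i \<ge> i0 \<Longrightarrow> (\<Sum>j=1..L. w i j) = 1"
    and w1: "\<And>i. i \<ge> i0 \<Longrightarrow> \<delta> \<le> w i 1"
    and rec: "\<And>i. i \<ge> i0 \<Longrightarrow> x i = (\<Sum>j=1..L. w i j * x (i - j)) + e i"
    and esum: "summable (\<lambda>i. \<bar>e i\<bar>)"
    and bnd: "\<And>i. \<bar>x i\<bar> \<le> B"
begin

lemma crec_neg: "crec (\<lambda>i. - x i) (\<lambda>i. - e i) w L i0 \<delta> B"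
proof
  fix i assume "i0 \<le> i"
  then show "- x i = (\<Sum>j = 1..L. w i j * - x (i - j)) + - e i"
    using rec[of i] by (simp add: sum_negf)
qed (use L1 i0L dpos d1 wnn wsum1 w1 esum bnd in auto)

definition T :: "nat \<Rightarrow> real" where "T j = (\<Sum>i. \<bar>e i\<bar>) - (\<Sum>i<j. \<bar>e i\<bar>)"

lemma T_Suc: "T (Suc j) = T j - \<bar>e j\<bar>" unfolding T_def by simp

lemma T_nonneg: "0 \<le> T j"
  unfolding T_def using sum_le_suminf[OF esum, of "{..<j}"] by auto

lemma T_mono: "i \<le> l \<Longrightarrow> T l \<le> T i"
  unfolding T_def by (simp add: sum_mono2)

lemma T_lim: "T \<longlonglongrightarrow> 0"
proof -
  have "(\<lambda>j. \<Sum>i<j. \<bar>e i\<bar>) \<longlonglongrightarrow> (\<Sum>i. \<bar>e i\<bar>)" using summable_LIMSEQ[OF esum] .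
  then have "(\<lambda>j. (\<Sum>i. \<bar>e i\<bar>) - (\<Sum>i<j. \<bar>e i\<bar>)) \<longlonglongrightarrow> (\<Sum>i. \<bar>e i\<bar>) - (\<Sum>i. \<bar>e i\<bar>)"
    by (intro tendsto_intros)
  then show ?thesis unfolding T_def by simp
qed

lemma step_bound:
  assumes "l \<ge> i0" "\<forall>j\<in>{1..L}. x (l - j) \<le> h"
  shows "x l \<le> h + \<bar>e l\<bar>"
proof -
  have "(\<Sum>j=1..L. w l j * x (l - j)) \<le> (\<Sum>j=1..L. w l j * h)"
    using assms wnn by (intro sum_mono mult_left_mono) auto
  also have "\<dots> = h" using wsum1[OF assms(1)] by (simp add: sum_distrib_right[symmetric])
  finally show ?thesis using rec[OF assms(1)] by linarith
qed

lemma step_low: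
  assumes "l \<ge> i0" "\<forall>j\<in>{1..L}. c \<le> x (l - j)"
  shows "x l - c \<ge> \<delta> * (x (l - 1) - c) - \<bar>e l\<bar>"
proof -
  have "x l - c = (\<Sum>j=1..L. w l j * x (l - j)) - (\<Sum>j=1..L. w l j * c) + e l"
    using rec[OF assms(1)] wsum1[OF assms(1)] by (simp add: sum_distrib_right[symmetric])
  also have "(\<Sum>j=1..L. w l j * x (l - j)) - (\<Sum>j=1..L. w l j * c) = (\<Sum>j=1..L. w l j * (x (l - j) - c))"
    by (simp add: sum_subtractf right_diff_distrib)
  finally have eq: "x l - c = (\<Sum>j=1..L. w l j * (x (l - j) - c)) + e l" .
  have "w l 1 * (x (l - 1) - c) \<le> (\<Sum>j=1..L. w l j * (x (l - j) - c))"
    using assms wnn L1 by (intro member_le_sum) auto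
  moreover have "\<delta> * (x (l - 1) - c) \<le> w l 1 * (x (l - 1) - c)"
    using assms L1 w1 by (intro mult_right_mono) auto
  ultimately show ?thesis using eq by linarith
qed

lemma upper_stay:
  assumes "i \<ge> i0" "\<forall>q\<in>{i+1-L..i}. x q \<le> h"
  shows "\<forall>l\<in>{i..i+n}. x l \<le> h + T (i+1) - T (l+1)"
proof (induction n)
  case 0
  then show ?case using assms L1 by auto
next
  case (Suc n)
  have "x (i + Suc n) \<le> h + T (i+1) - T (i + Suc n + 1)"
  proof -
    let ?l = "i + Suc n"
    have "\<forall>j\<in>{1..L}. x (?l - j) \<le> h + T (i+1) - T ?l"
    proof
      fix j assume j: "j \<in> {1..L}"
      show "x (?l - j) \<le> h + T (i+1) - T ?l"
      proof (cases "?l - j \<le> i")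
        case True
        then have "x (?l - j) \<le> h" using assms(2) j by auto
        moreover have "T ?l \<le> T (i+1)" by (rule T_mono) simp
        ultimately show ?thesis by linarith
      next
        case False
        then have "x (?l - j) \<le> h + T (i+1) - T (?l - j + 1)" using Suc.IH j by auto
        moreover have "T ?l \<le> T (?l - j + 1)" by (rule T_mono) (use j in auto)
        ultimately show ?thesis by linarith
      qed
    qed
    then have "x ?l \<le> h + T (i+1) - T ?l + \<bar>e ?l\<bar>" using step_bound assms(1) by simp
    then show ?thesis using T_Suc[of ?l] by simp
  qed
  then show ?case using Suc.IH by (auto simp: le_Suc_eq)
qed

lemma upper_stay':
  assumes "i \<ge> i0" "\<forall>q\<in>{i+1-L..i}. x q \<le> h" "l \<ge> i+1-L"
  shows "x l \<le> h + T (i+1)"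
proof (cases "l \<le> i")
  case True
  then have "x l \<le> h" using assms by auto
  then show ?thesis using T_nonneg[of "i+1"] by linarith
next
  case False
  then have "x l \<le> h + T (i+1) - T (l+1)" using upper_stay[OF assms(1,2), of "l - i"] by auto
  then show ?thesis using T_nonneg[of "l+1"] by linarith
qed


lemma lower_stay':
  assumes "i \<ge> i0" "\<forall>q\<in>{i+1-L..i}. c \<le> x q" "l \<ge> i+1-L"
  shows "c - T (i+1) \<le> x l"
proof -
  interpret neg: crec "\<lambda>i. - x i" "\<lambda>i. - e i" w L i0 \<delta> B by (rule crec_neg)
  have TT: "neg.T = T" unfolding neg.T_def T_def by simp
  have "- x l \<le> - c + neg.T (i+1)" using neg.upper_stay'[OF assms(1) _ assms(3), of "-c"] assms(2) by auto
  then show ?thesis unfolding TT by linarith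
qed

lemma lower_chain:
  assumes "i \<ge> i0" "\<forall>q\<in>{i+1-L..i}. c \<le> x q"
  shows "x (i+k) - (c - T (i+1)) \<ge> \<delta>^k * (x i - (c - T (i+1))) - (T (i+1) - T (i+k+1))"
proof (induction k)
  case 0 then show ?case by simp
next
  case (Suc k)
  let ?lo = "c - T (i+1)"
  let ?l = "i + Suc k"
  have low: "\<forall>j\<in>{1..L}. ?lo \<le> x (?l - j)"
    using lower_stay'[OF assms] by auto
  have st: "x ?l - ?lo \<ge> \<delta> * (x (?l - 1) - ?lo) - \<bar>e ?l\<bar>"
    using step_low[OF _ low] assms(1) by simp
  have g: "0 \<le> T (i+1) - T (i+k+1)" using T_mono[of "i+1" "i+k+1"] by simp
  have "\<delta> * (x (i + k) - ?lo) \<ge> \<delta> * (\<delta>^k * (x i - ?lo) - (T (i+1) - T (i+k+1)))"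
    using Suc.IH dpos by (intro mult_left_mono) auto
  moreover have "\<delta> * (T (i+1) - T (i+k+1)) \<le> T (i+1) - T (i+k+1)"
    using g d1 dpos by (simp add: mult_left_le_one_le)
  moreover have "T (i + Suc k + 1) = T (i+k+1) - \<bar>e ?l\<bar>" using T_Suc[of ?l] by simp
  ultimately show ?case using st by (simp add: algebra_simps)
qed

definition Mx :: "nat \<Rightarrow> real" where "Mx i = Max (x ` {i+1-L..i})"
definition mn :: "nat \<Rightarrow> real" where "mn i = Min (x ` {i+1-L..i})"

lemma win_ne: "{i+1-L..i} \<noteq> {}" using L1 by auto

lemma Mx_ge: "q \<in> {i+1-L..i} \<Longrightarrow> x q \<le> Mx i"
  unfolding Mx_def by (intro Max_ge) auto
lemma mn_le: "q \<in> {i+1-L..i} \<Longrightarrow> mn i \<le> x q"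
  unfolding mn_def by (intro Min_le) auto
lemma Mx_le: "(\<And>q. q \<in> {i+1-L..i} \<Longrightarrow> x q \<le> h) \<Longrightarrow> Mx i \<le> h"
  unfolding Mx_def using win_ne by (subst Max_le_iff) auto
lemma mn_ge: "(\<And>q. q \<in> {i+1-L..i} \<Longrightarrow> h \<le> x q) \<Longrightarrow> h \<le> mn i"
  unfolding mn_def using win_ne by (subst Min_ge_iff) auto

lemma contraction:
  assumes "i \<ge> i0"
  shows "Mx (i+L) - mn (i+L) \<le> (1 - \<delta>^L/2) * (Mx i - mn i) + 3 * T (i+1)"
proof -
  interpret neg: crec "\<lambda>i. - x i" "\<lambda>i. - e i" w L i0 \<delta> B by (rule crec_neg)
  have TT: "neg.T = T" unfolding neg.T_def T_def by simp
  define lo where "lo = mn i - T (i+1)"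
  define hi where "hi = Mx i + T (i+1)"
  define t where "t = T (i+1)"
  have t0: "0 \<le> t" using T_nonneg t_def by simp
  have dL: "0 < \<delta>^L" "\<delta>^L \<le> 1" using dpos d1 by (auto simp: power_le_one)
  have wl: "\<forall>q\<in>{i+1-L..i}. mn i \<le> x q" using mn_le by auto
  have wh: "\<forall>q\<in>{i+1-L..i}. - Mx i \<le> - x q" using Mx_ge by auto
  have "i \<in> {i+1-L..i}" using L1 by auto
  then have xi: "lo \<le> x i" "x i \<le> hi" unfolding lo_def hi_def using mn_le[of i i] Mx_ge[of i i] t0 t_def by auto
  have up: "x q \<le> hi" if "q \<ge> i+1-L" for q
    using upper_stay'[OF assms _ that, of "Mx i"] Mx_ge unfolding hi_def by auto
  have dn: "lo \<le> x q" if "q \<ge> i+1-L" for q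
    using lower_stay'[OF assms wl that] unfolding lo_def by auto
  have ch1: "x (i+k) - lo \<ge> \<delta>^L * (x i - lo) - t" if "k \<le> L" for k
  proof -
    have a: "x (i+k) - lo \<ge> \<delta>^k * (x i - lo) - (T (i+1) - T (i+k+1))"
      using lower_chain[OF assms wl] unfolding lo_def by simp
    have "\<delta>^L \<le> \<delta>^k" using that dpos d1 by (simp add: power_decreasing)
    then have "\<delta>^L * (x i - lo) \<le> \<delta>^k * (x i - lo)" using xi by (intro mult_right_mono) auto
    moreover have "0 \<le> T (i+k+1)" by (rule T_nonneg)
    ultimately show ?thesis using a t_def by linarith
  qed
  have ch2: "hi - x (i+k) \<ge> \<delta>^L * (hi - x i) - t" if "k \<le> L" for k
  proof -
    have a: "- x (i+k) - (- Mx i - T (i+1)) \<ge> \<delta>^k * (- x i - (- Mx i - T (i+1))) - (T (i+1) - T (i+k+1))"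
      using neg.lower_chain[OF assms wh] unfolding TT by simp
    have "\<delta>^L \<le> \<delta>^k" using that dpos d1 by (simp add: power_decreasing)
    then have "\<delta>^L * (hi - x i) \<le> \<delta>^k * (hi - x i)" using xi by (intro mult_right_mono) auto
    moreover have "0 \<le> T (i+k+1)" by (rule T_nonneg)
    ultimately show ?thesis using a t_def hi_def by (simp add: algebra_simps)
  qed
  have win: "q \<in> {i+L+1-L..i+L} \<Longrightarrow> \<exists>k. k \<le> L \<and> q = i + k \<and> q \<ge> i+1-L" for q by (rule exI[of _ "q - i"]) auto
  have D: "hi - lo = Mx i - mn i + 2 * t" unfolding hi_def lo_def t_def by simp
  show ?thesis
  proof (cases "x i - lo \<ge> (hi - lo) / 2")
    case True
    have "lo + \<delta>^L * ((hi - lo)/2) - t \<le> mn (i+L)"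
    proof (rule mn_ge)
      fix q assume "q \<in> {i+L+1-L..i+L}"
      then obtain k where k: "k \<le> L" "q = i + k" using win by blast
      have "\<delta>^L * ((hi - lo)/2) \<le> \<delta>^L * (x i - lo)" using True dL by (intro mult_left_mono) auto
      then show "lo + \<delta>^L * ((hi - lo)/2) - t \<le> x q" using ch1[OF k(1)] k by simp
    qed
    moreover have "Mx (i+L) \<le> hi" by (rule Mx_le) (use up in auto)
    ultimately have "Mx (i+L) - mn (i+L) \<le> (hi - lo) - \<delta>^L * ((hi - lo)/2) + t" by linarith
    also have "\<dots> = (1 - \<delta>^L/2) * (hi - lo) + t" by (simp add: algebra_simps)
    also have "\<dots> \<le> (1 - \<delta>^L/2) * (Mx i - mn i) + 3 * T (i+1)"
      unfolding D t_def using dL T_nonneg[of "i+1"] by (simp add: algebra_simps)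
    finally show ?thesis .
  next
    case False
    then have F: "hi - x i \<ge> (hi - lo) / 2" by simp
    have "Mx (i+L) \<le> hi - \<delta>^L * ((hi - lo)/2) + t"
    proof (rule Mx_le)
      fix q assume "q \<in> {i+L+1-L..i+L}"
      then obtain k where k: "k \<le> L" "q = i + k" using win by blast
      have "\<delta>^L * ((hi - lo)/2) \<le> \<delta>^L * (hi - x i)" using F dL by (intro mult_left_mono) auto
      then show "x q \<le> hi - \<delta>^L * ((hi - lo)/2) + t" using ch2[OF k(1)] k by simp
    qed
    moreover have "lo \<le> mn (i+L)" by (rule mn_ge) (use dn in auto)
    ultimately have "Mx (i+L) - mn (i+L) \<le> (hi - lo) - \<delta>^L * ((hi - lo)/2) + t" by linarith
    also have "\<dots> = (1 - \<delta>^L/2) * (hi - lo) + t" by (simp add: algebra_simps)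
    also have "\<dots> \<le> (1 - \<delta>^L/2) * (Mx i - mn i) + 3 * T (i+1)"
      unfolding D t_def using dL T_nonneg[of "i+1"] by (simp add: algebra_simps)
    finally show ?thesis .
  qed
qed


lemma Mx_abs: "\<bar>Mx i\<bar> \<le> B"
proof -
  have "Mx i \<in> x ` {i+1-L..i}" unfolding Mx_def using win_ne by (intro Max_in) auto
  then show ?thesis using bnd by auto
qed

lemma mn_abs: "\<bar>mn i\<bar> \<le> B"
proof -
  have "mn i \<in> x ` {i+1-L..i}" unfolding mn_def using win_ne by (intro Min_in) auto
  then show ?thesis using bnd by auto
qed

lemma Mx_step: "i \<ge> i0 \<Longrightarrow> Mx (Suc i) \<le> Mx i + \<bar>e (Suc i)\<bar>"
proof (rule Mx_le)
  fix q assume i: "i \<ge> i0" and q: "q \<in> {Suc i + 1 - L..Suc i}"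
  show "x q \<le> Mx i + \<bar>e (Suc i)\<bar>"
  proof (cases "q = Suc i")
    case True
    have "\<forall>j\<in>{1..L}. x (Suc i - j) \<le> Mx i" by (intro ballI Mx_ge) auto
    then show ?thesis using step_bound[of "Suc i" "Mx i"] i True by simp
  next
    case False
    then have "x q \<le> Mx i" using q by (intro Mx_ge) auto
    then show ?thesis by simp
  qed
qed

lemma mn_step: "i \<ge> i0 \<Longrightarrow> mn i - \<bar>e (Suc i)\<bar> \<le> mn (Suc i)"
proof (rule mn_ge)
  interpret neg: crec "\<lambda>i. - x i" "\<lambda>i. - e i" w L i0 \<delta> B by (rule crec_neg)
  fix q assume i: "i \<ge> i0" and q: "q \<in> {Suc i + 1 - L..Suc i}"
  show "mn i - \<bar>e (Suc i)\<bar> \<le> x q"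
  proof (cases "q = Suc i")
    case True
    have "\<forall>j\<in>{1..L}. mn i \<le> x (Suc i - j)" by (intro ballI mn_le) auto
    then have "\<forall>j\<in>{1..L}. - x (Suc i - j) \<le> - mn i" by simp
    then show ?thesis using neg.step_bound[of "Suc i" "- mn i"] i True by simp
  next
    case False
    then have "mn i \<le> x q" using q by (intro mn_le) auto
    then show ?thesis by simp
  qed
qed

theorem crec_convergent: "convergent x"
proof -
  define U where "U i = Mx i + T (Suc i)" for i
  define V where "V i = mn i - T (Suc i)" for i
  have T0: "T i \<le> T 0" for i using T_mono by simp
  have Ustep: "U (Suc i) \<le> U i" if "i \<ge> i0" for i
    using Mx_step[OF that] T_Suc[of "Suc i"] unfolding U_def by simp
  have Vstep: "V i \<le> V (Suc i)" if "i \<ge> i0" for i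
    using mn_step[OF that] T_Suc[of "Suc i"] unfolding V_def by simp
  have "convergent U"
  proof (rule Bseq_monoseq_convergent'_dec[of _ i0])
    show "Bseq (\<lambda>n. U (n + i0))"
    proof (rule BseqI')
      fix n show "norm (U (n + i0)) \<le> B + T 0"
        using Mx_abs[of "n+i0"] T0[of "Suc (n+i0)"] T_nonneg[of "Suc (n+i0)"] unfolding U_def by simp
    qed
    fix m n assume "i0 \<le> m" "m \<le> n"
    from \<open>m \<le> n\<close> show "U n \<le> U m"
    proof (induction n rule: dec_induct)
      case (step n) then show ?case using Ustep[of n] \<open>i0 \<le> m\<close> by simp
    qed simp
  qed
  then obtain u where u: "U \<longlonglongrightarrow> u" by (auto simp: convergent_def)
  have "convergent V"
  proof (rule Bseq_monoseq_convergent'_inc[of _ i0])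
    show "Bseq (\<lambda>n. V (n + i0))"
    proof (rule BseqI')
      fix n show "norm (V (n + i0)) \<le> B + T 0"
        using mn_abs[of "n+i0"] T0[of "Suc (n+i0)"] T_nonneg[of "Suc (n+i0)"] unfolding V_def by simp
    qed
    fix m n assume "i0 \<le> m" "m \<le> n"
    from \<open>m \<le> n\<close> show "V m \<le> V n"
    proof (induction n rule: dec_induct)
      case (step n) then show ?case using Vstep[of n] \<open>i0 \<le> m\<close> by simp
    qed simp
  qed
  then obtain v where v: "V \<longlonglongrightarrow> v" by (auto simp: convergent_def)
  have TS: "(\<lambda>i. T (Suc i)) \<longlonglongrightarrow> 0" using T_lim by (rule LIMSEQ_Suc)
  have Mxl: "Mx \<longlonglongrightarrow> u"
  proof -
    have "(\<lambda>i. U i - T (Suc i)) \<longlonglongrightarrow> u - 0" by (intro tendsto_intros u TS)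
    then show ?thesis unfolding U_def by simp
  qed
  have mnl: "mn \<longlonglongrightarrow> v"
  proof -
    have "(\<lambda>i. V i + T (Suc i)) \<longlonglongrightarrow> v + 0" by (intro tendsto_intros v TS)
    then show ?thesis unfolding V_def by simp
  qed
  define c where "c = \<delta>^L / 2"
  have "\<delta>^L \<le> 1" using dpos d1 by (simp add: power_le_one)
  then have c: "0 < c" "c \<le> 1" using dpos by (auto simp: c_def)
  have D: "(\<lambda>i. Mx i - mn i) \<longlonglongrightarrow> u - v" by (intro tendsto_intros Mxl mnl)
  have DL: "(\<lambda>i. Mx (i + L) - mn (i + L)) \<longlonglongrightarrow> u - v" using LIMSEQ_ignore_initial_segment[OF D] .
  have R: "(\<lambda>i. (1 - c) * (Mx i - mn i) + 3 * T (i+1)) \<longlonglongrightarrow> (1 - c) * (u - v) + 3 * 0"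
    using TS by (intro tendsto_intros D) simp
  have "u - v \<le> (1 - c) * (u - v) + 3 * 0"
    by (rule LIMSEQ_le[OF DL R]) (use contraction in \<open>auto simp: c_def\<close>)
  then have le: "u - v \<le> 0" using c by (simp add: algebra_simps)
  have "0 \<le> u - v"
  proof (rule LIMSEQ_le_const[OF D])
    show "\<exists>N. \<forall>n\<ge>N. 0 \<le> Mx n - mn n"
    proof (intro exI allI impI)
      fix n
      have "n \<in> {n+1-L..n}" using L1 by auto
      then show "0 \<le> Mx n - mn n" using Mx_ge[of n n] mn_le[of n n] by simp
    qed
  qed
  then have uv: "u = v" using le by simp
  have "x \<longlonglongrightarrow> u"
  proof (rule tendsto_sandwich[OF _ _ mnl[unfolded uv[symmetric]] Mxl])
    show "\<forall>\<^sub>F n in sequentially. mn n \<le> x n" using mn_le L1 by (intro always_eventually) auto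
    show "\<forall>\<^sub>F n in sequentially. x n \<le> Mx n" using Mx_ge L1 by (intro always_eventually) auto
  qed
  then show ?thesis by (auto simp: convergent_def)
qed

end




lemma sum_window:
  fixes h :: "nat \<Rightarrow> 'b::comm_semiring_1"
  assumes "L < i" "set xs \<subseteq> {i-L..i-1}"
  shows "sum_list (map h xs) = (\<Sum>j=1..L. of_nat (count_list xs (i-j)) * h (i-j))"
  using assms(2)
proof (induction xs)
  case Nil then show ?case by simp
next
  case (Cons x xs)
  have x: "i - L \<le> x" "x \<le> i - 1" using Cons.prems by auto
  have "(\<Sum>j=1..L. (if x = i - j then h (i-j) else 0)) = (\<Sum>j=1..L. (if j = i - x then h x else 0))"
    by (rule sum.cong[OF refl]) (use x assms(1) in auto)
  also have "\<dots> = h x"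
  proof -
    have "i - x \<in> {1..L}" using x assms(1) by auto
    then show ?thesis by (simp add: sum.delta)
  qed
  finally have d: "(\<Sum>j=1..L. (if x = i - j then h (i-j) else 0)) = h x" .
  have "(\<Sum>j=1..L. of_nat (count_list (x # xs) (i-j)) * h (i-j))
      = (\<Sum>j=1..L. of_nat (count_list xs (i-j)) * h (i-j)) + (\<Sum>j=1..L. (if x = i - j then h (i-j) else 0))"
    by (simp add: sum.distrib[symmetric]) (rule sum.cong[OF refl], simp add: distrib_right add.commute)
  then show ?case using Cons d by (simp add: add.commute)
qed

lemma count_le_sum:
  fixes h :: "nat \<Rightarrow> real"
  assumes "\<And>v. 0 \<le> h v"
  shows "real (count_list xs v) * h v \<le> sum_list (map h xs)"
proof (induction xs)
  case Nil then show ?case by simp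
next
  case (Cons x xs)
  then show ?case using assms[of x] by (auto simp: distrib_right)
qed

lemma sum_list_nonneg': "(\<And>v. 0 \<le> (h v::real)) \<Longrightarrow> 0 \<le> sum_list (map h xs)"
  by (induction xs) (auto intro: add_nonneg_nonneg)

context wset
begin

definition th :: "nat \<Rightarrow> real" where "th k = dist_int (\<alpha> * of_int (b k))"

lemma norm_wsum: "norm (wsum ks) \<le> real (sum_list (map a ks))"
proof (induction ks)
  case Nil then show ?case by simp
next
  case (Cons k ks)
  have "norm (wsum (k # ks)) \<le> norm (F (a k)) + norm (ee (\<alpha> * of_int (b k)) * wsum ks)"
    by (simp add: norm_triangle_ineq)
  also have "\<dots> \<le> real (a k) + real (sum_list (map a ks))"
    using norm_F[of "a k"] Cons by (simp add: norm_mult)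
  finally show ?case by simp
qed

lemma wsum_diff:
  "norm (wsum ks - sum_list (map (\<lambda>k. F (a k)) ks))
     \<le> sum_list (map (\<lambda>k. 2 * pi * th k) ks) * real (sum_list (map a ks))"
proof (induction ks)
  case Nil then show ?case by simp
next
  case (Cons k ks)
  define P where "P = sum_list (map (\<lambda>k. F (a k)) ks)"
  define S where "S = real (sum_list (map a ks))"
  define Tk where "Tk = sum_list (map (\<lambda>k. 2 * pi * th k) ks)"
  have S0: "0 \<le> S" unfolding S_def by simp
  have T0: "0 \<le> Tk" unfolding Tk_def by (rule sum_list_nonneg') (simp add: th_def dist_int_nonneg)
  have t0: "0 \<le> 2 * pi * th k" by (simp add: th_def dist_int_nonneg)
  have "wsum (k # ks) - sum_list (map (\<lambda>k. F (a k)) (k # ks))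
      = (ee (\<alpha> * of_int (b k)) - 1) * wsum ks + (wsum ks - P)"
    by (simp add: P_def algebra_simps)
  then have "norm (wsum (k # ks) - sum_list (map (\<lambda>k. F (a k)) (k # ks)))
      \<le> norm (ee (\<alpha> * of_int (b k)) - 1) * norm (wsum ks) + norm (wsum ks - P)"
    by (metis norm_mult norm_triangle_ineq)
  also have "\<dots> \<le> (2 * pi * th k) * S + Tk * S"
    using ee_minus_1[of "\<alpha> * of_int (b k)"] norm_wsum[of ks] Cons.IH
    unfolding th_def S_def Tk_def P_def
    by (intro add_mono mult_mono) (auto simp: dist_int_nonneg)
  also have "\<dots> \<le> (2 * pi * th k + Tk) * (real (a k) + S)"
  proof -
    have "0 \<le> (2 * pi * th k + Tk) * real (a k)" using T0 t0 by simp
    moreover have "(2 * pi * th k + Tk) * (real (a k) + S) = 2 * pi * th k * S + Tk * S + (2 * pi * th k + Tk) * real (a k)"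
      by (simp add: algebra_simps)
    ultimately show ?thesis by linarith
  qed
  finally show ?case by (simp add: Tk_def S_def)
qed

end




locale mild = wset a b \<alpha> for a b \<alpha> +
  fixes L :: nat and s :: real
  assumes win: "\<And>n. n \<ge> 2 \<Longrightarrow> set (greedy_list a (n - 1) (a n)) \<subseteq> {n - L..n - 1}"
    and s1: "s > 1"
    and grow: "\<And>n. n \<ge> 1 \<Longrightarrow> real (a (Suc n)) < s * real (a n)"
    and thsum: "summable (\<lambda>k. dist_int (\<alpha> * of_int (b k)))"
begin

lemma sum_list_real: "sum_list (map (\<lambda>k. real (a k)) xs) = real (sum_list (map a xs))"
  by (induction xs) auto

definition js :: "nat \<Rightarrow> nat list" where "js i = greedy_list a (i - 1) (a i)"

lemma js_props:
  assumes "i \<ge> 2"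
  shows "F (a i) = wsum (js i) \<and> sum_list (map a (js i)) = a i \<and> set (js i) \<subseteq> {1..i-1}"
proof -
  have "a i \<le> a (Suc (i - 1))" using assms by simp
  then show ?thesis using greedy_wsum[of "i - 1" "a i"] assms unfolding js_def by simp
qed

lemma js_hd:
  assumes "i \<ge> 2"
  shows "i - 1 \<in> set (js i)"
proof -
  have gs: "greedy_set a (i - 1) (a i) = {1..i-1}"
    unfolding greedy_set_def using assms a_pos a_le by auto
  have ne: "greedy_set a (i - 1) (a i) \<noteq> {}" using gs assms by simp
  have mx: "Max (greedy_set a (i - 1) (a i)) = i - 1" unfolding gs using assms by (intro Max_eqI) auto
  have "js i = (i - 1) # greedy_list a (i - 1) (a i - a (i - 1))"
    unfolding js_def by (subst greedy_list.simps) (use ne mx in \<open>simp add: Let_def\<close>)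
  then show ?thesis by simp
qed

lemma L1: "L \<ge> 1"
proof (rule ccontr)
  assume "\<not> L \<ge> 1"
  then have "L = 0" by simp
  then show False using win[of 2] js_hd[of 2] unfolding js_def by auto
qed

lemma js_win: "i \<ge> 2 \<Longrightarrow> set (js i) \<subseteq> {i - L..i - 1}"
  unfolding js_def by (rule win)

lemma a_pow: "n \<ge> 1 \<Longrightarrow> real (a (n + k)) \<le> s^k * real (a n)"
proof (induction k)
  case 0 then show ?case by simp
next
  case (Suc k)
  have "real (a (n + Suc k)) \<le> s * real (a (n + k))" using grow[of "n + k"] Suc.prems by simp
  also have "\<dots> \<le> s * (s^k * real (a n))" using Suc s1 by (intro mult_left_mono) auto
  finally show ?case by (simp add: mult_ac)
qed

lemma count_bound:
  assumes "i \<ge> L + 2" "v \<in> {i-L..i-1}"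
  shows "real (count_list (js i) v) \<le> s^L"
proof -
  have av: "0 < real (a v)" using assms a_pos by auto
  have "real (count_list (js i) v) * real (a v) \<le> sum_list (map (\<lambda>k. real (a k)) (js i))"
    by (rule count_le_sum) simp
  also have "\<dots> = real (a i)"
    using js_props[of i] assms by (simp add: sum_list_real)
  also have "\<dots> \<le> s^L * real (a (i - L))" using a_pow[of "i - L" L] assms by simp
  also have "\<dots> \<le> s^L * real (a v)" using assms a_le[of "i - L" v] s1 by (intro mult_left_mono) auto
  finally show ?thesis using av by simp
qed

definition X :: "nat \<Rightarrow> complex" where "X i = F (a i) / of_nat (a i)"
definition w :: "nat \<Rightarrow> nat \<Rightarrow> real" where
  "w i j = real (count_list (js i) (i - j)) * real (a (i - j)) / real (a i)"
definition eps :: "nat \<Rightarrow> complex" where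
  "eps i = X i - (\<Sum>j=1..L. of_real (w i j) * X (i - j))"

lemma norm_X: "norm (X i) \<le> 1"
proof (cases "a i = 0")
  case True then show ?thesis by (simp add: X_def)
next
  case False
  then show ?thesis using norm_F[of "a i"] by (simp add: X_def norm_divide divide_le_eq_1)
qed

lemma w_sum: "i \<ge> L + 2 \<Longrightarrow> (\<Sum>j=1..L. w i j) = 1"
proof -
  assume i: "i \<ge> L + 2"
  have ai: "0 < real (a i)" using a_pos i by simp
  have "(\<Sum>j=1..L. w i j) = (\<Sum>j=1..L. of_nat (count_list (js i) (i - j)) * real (a (i - j))) / real (a i)"
    unfolding w_def by (simp add: sum_divide_distrib)
  also have "(\<Sum>j=1..L. of_nat (count_list (js i) (i - j)) * real (a (i - j))) = sum_list (map (\<lambda>k. real (a k)) (js i))"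
    using sum_window[of L i "js i" "\<lambda>k. real (a k)"] js_win[of i] i by simp
  also have "\<dots> = real (a i)"
    using js_props[of i] i by (simp add: sum_list_real)
  finally show ?thesis using ai by simp
qed

lemma w_nn: "0 \<le> w i j" unfolding w_def by simp

lemma w_1: "i \<ge> L + 2 \<Longrightarrow> 1 / s \<le> w i 1"
proof -
  assume i: "i \<ge> L + 2"
  have c: "1 \<le> real (count_list (js i) (i - 1))"
    using js_hd[of i] i count_list_0_iff[of "js i" "i - 1"] by auto
  have ai: "0 < real (a i)" using a_pos i by simp
  have "real (a i) < s * real (a (i - 1))" using grow[of "i - 1"] i by simp
  then have "1 / s \<le> real (a (i - 1)) / real (a i)" using ai s1 by (simp add: field_simps)
  also have "\<dots> \<le> real (count_list (js i) (i - 1)) * real (a (i - 1)) / real (a i)"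
    using c ai by (simp add: divide_right_mono mult_le_cancel_right1)
  finally show ?thesis unfolding w_def by simp
qed

lemma eps_bound:
  assumes i: "i \<ge> L + 2"
  shows "norm (eps i) \<le> 2 * pi * s^L * (\<Sum>j=1..L. th (i - j))"
proof -
  have ai: "0 < real (a i)" using a_pos i by simp
  have jp: "F (a i) = wsum (js i)" "sum_list (map a (js i)) = a i" using js_props[of i] i by auto
  have "(\<Sum>j=1..L. of_real (w i j) * X (i - j))
      = (\<Sum>j=1..L. of_nat (count_list (js i) (i - j)) * F (a (i - j))) / of_nat (a i)"
    unfolding sum_divide_distrib
  proof (rule sum.cong[OF refl])
    fix j assume j: "j \<in> {1..L}"
    have "1 \<le> i - j" using j i by auto
    then have "0 < a (i - j)" using a_pos[of "i - j"] by simp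
    then show "of_real (w i j) * X (i - j) = of_nat (count_list (js i) (i - j)) * F (a (i - j)) / of_nat (a i)"
      unfolding w_def X_def by (simp add: field_simps)
  qed
  also have "(\<Sum>j=1..L. of_nat (count_list (js i) (i - j)) * F (a (i - j))) = sum_list (map (\<lambda>k. F (a k)) (js i))"
    using sum_window[of L i "js i" "\<lambda>k. F (a k)"] js_win[of i] i by simp
  finally have "eps i = (wsum (js i) - sum_list (map (\<lambda>k. F (a k)) (js i))) / of_nat (a i)"
    unfolding eps_def X_def jp(1) by (simp add: diff_divide_distrib)
  then have "norm (eps i) \<le> sum_list (map (\<lambda>k. 2 * pi * th k) (js i)) * real (a i) / real (a i)"
    using wsum_diff[of "js i"] jp(2) ai by (simp add: norm_divide pos_divide_le_eq)
  also have "\<dots> = sum_list (map (\<lambda>k. 2 * pi * th k) (js i))" using ai by simp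
  also have "\<dots> = (\<Sum>j=1..L. of_nat (count_list (js i) (i - j)) * (2 * pi * th (i - j)))"
    using sum_window[of L i "js i" "\<lambda>k. 2 * pi * th k"] js_win[of i] i by simp
  also have "\<dots> \<le> (\<Sum>j=1..L. s^L * (2 * pi * th (i - j)))"
  proof (rule sum_mono)
    fix j assume j: "j \<in> {1..L}"
    have "i - j \<in> {i - L..i - 1}" using i j by auto
    then show "of_nat (count_list (js i) (i - j)) * (2 * pi * th (i - j)) \<le> s^L * (2 * pi * th (i - j))"
      using count_bound[of i "i - j"] i by (intro mult_right_mono) (auto simp: th_def dist_int_nonneg)
  qed
  also have "\<dots> = 2 * pi * s^L * (\<Sum>j=1..L. th (i - j))" by (simp add: sum_distrib_left mult_ac)
  finally show ?thesis .
qed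

lemma eps_summable: "summable (\<lambda>i. 2 * pi * s^L * (\<Sum>j=1..L. th (i - j)))"
proof -
  have "summable th" using thsum unfolding th_def by simp
  have "summable (\<lambda>i. th (i - j))" for j
  proof -
    have "summable (\<lambda>i. th (i + j - j))" using \<open>summable th\<close> by simp
    then show ?thesis by (subst summable_iff_shift[symmetric, of _ j])
  qed
  then show ?thesis by (intro summable_mult summable_sum)
qed

lemma X_rec: "i \<ge> L + 2 \<Longrightarrow> X i = (\<Sum>j=1..L. of_real (w i j) * X (i - j)) + eps i"
  unfolding eps_def by simp

lemma X_conv: "convergent X"
proof -
  have sp: "0 < 1 / s" "1 / s \<le> 1" using s1 by auto
  have bR: "\<bar>Re (X i)\<bar> \<le> 1" for i using abs_Re_le_cmod norm_X by (rule order_trans)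
  have bI: "\<bar>Im (X i)\<bar> \<le> 1" for i using abs_Im_le_cmod norm_X by (rule order_trans)
  have eb: "\<And>i. i \<ge> L + 2 \<Longrightarrow> norm (eps i) \<le> 2 * pi * s^L * (\<Sum>j=1..L. th (i - j))" by (rule eps_bound)
  interpret re: crec "\<lambda>i. Re (X i)" "\<lambda>i. Re (eps i)" w L "L + 2" "1 / s" 1
  proof
    show "summable (\<lambda>i. \<bar>Re (eps i)\<bar>)"
      by (rule summable_comparison_test'[OF eps_summable, of "L + 2"])
         (use eb abs_Re_le_cmod order_trans in fastforce)
    fix i assume i: "L + 2 \<le> i"
    show "Re (X i) = (\<Sum>j = 1..L. w i j * Re (X (i - j))) + Re (eps i)"
      using arg_cong[OF X_rec[OF i], of Re] by (simp add: Re_sum)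
  qed (use L1 sp w_nn w_sum w_1 bR in auto)
  interpret im: crec "\<lambda>i. Im (X i)" "\<lambda>i. Im (eps i)" w L "L + 2" "1 / s" 1
  proof
    show "summable (\<lambda>i. \<bar>Im (eps i)\<bar>)"
      by (rule summable_comparison_test'[OF eps_summable, of "L + 2"])
         (use eb abs_Im_le_cmod order_trans in fastforce)
    fix i assume i: "L + 2 \<le> i"
    show "Im (X i) = (\<Sum>j = 1..L. w i j * Im (X (i - j))) + Im (eps i)"
      using arg_cong[OF X_rec[OF i], of Im] by (simp add: Im_sum)
  qed (use L1 sp w_nn w_sum w_1 bI in auto)
  obtain p where p: "(\<lambda>i. Re (X i)) \<longlonglongrightarrow> p" using re.crec_convergent by (auto simp: convergent_def)
  obtain q where q: "(\<lambda>i. Im (X i)) \<longlonglongrightarrow> q" using im.crec_convergent by (auto simp: convergent_def)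
  have "(\<lambda>i. Complex (Re (X i)) (Im (X i))) \<longlonglongrightarrow> Complex p q" by (intro tendsto_Complex p q)
  then show ?thesis by (auto simp: convergent_def)
qed

end



context mild
begin

lemma E_bound:
  assumes K: "K \<ge> 1" and eps0: "0 \<le> \<epsilon>" and z1: "norm z \<le> 1"
    and H: "\<And>k. k \<ge> K \<Longrightarrow> norm (X k - z) \<le> \<epsilon> \<and> 2 * pi * s * th k \<le> \<epsilon>"
  shows "norm (F M - z * of_nat M) \<le> 2 * real (a K) + 2 * \<epsilon> * real M"
proof (induction M rule: less_induct)
  case (less M)
  show ?case
  proof (cases "M < a K")
    case True
    have "norm (F M - z * of_nat M) \<le> norm (F M) + norm (z * of_nat M)" by (rule norm_triangle_ineq4)
    also have "\<dots> \<le> real M + real M" using norm_F[of M] z1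
      by (intro add_mono) (auto simp: norm_mult intro: mult_left_le_one_le)
    finally have "norm (F M - z * of_nat M) \<le> 2 * real M" by simp
    moreover have "0 \<le> 2 * \<epsilon> * real M" using eps0 by simp
    moreover have "real M \<le> real (a K)" using True by simp
    ultimately show ?thesis by linarith
  next
    case False
    then have M1: "1 \<le> M" using a_pos[OF K] by simp
    obtain k where k: "k \<ge> 1" "a k \<le> M" "M < a (Suc k)" using top_exists[OF M1] by blast
    have kK: "k \<ge> K"
    proof (rule ccontr)
      assume "\<not> k \<ge> K"
      then have "a (Suc k) \<le> a K" using a_le[of "Suc k" K] by simp
      then show False using False k by simp
    qed
    have ak: "0 < a k" using a_pos k by simp
    define M' where "M' = M - a k"
    have MM: "M = a k + M'" using k unfolding M'_def by simp
    have M'lt: "M' < M" using ak k unfolding M'_def by simp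
    define ph where "ph = ee (\<alpha> * of_int (b k))"
    have split: "F M = F (a k) + ph * F M'"
      unfolding ph_def M'_def by (rule F_split) (use k in auto)
    have Fak: "F (a k) = X k * of_nat (a k)" unfolding X_def using ak by simp
    have eq: "F M - z * of_nat M = (X k - z) * of_nat (a k) + ph * (F M' - z * of_nat M') + (ph - 1) * z * of_nat M'"
    proof -
      have "F M - z * of_nat M = X k * of_nat (a k) + ph * F M' - z * (of_nat (a k) + of_nat M')"
        using split Fak MM by (metis of_nat_add)
      then show ?thesis by (simp add: algebra_simps)
    qed
    have n1: "norm ((X k - z) * of_nat (a k)) \<le> \<epsilon> * real (a k)"
      using H[OF kK] by (simp add: norm_mult mult_right_mono)
    have n2: "norm (ph * (F M' - z * of_nat M')) \<le> 2 * real (a K) + 2 * \<epsilon> * real M'"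
      using less.IH[OF M'lt] by (simp add: norm_mult ph_def)
    have "norm ((ph - 1) * z * of_nat M') \<le> (2 * pi * th k) * 1 * real M'"
      unfolding norm_mult using ee_minus_1[of "\<alpha> * of_int (b k)"] z1
      by (intro mult_mono) (auto simp: ph_def th_def dist_int_nonneg)
    also have "\<dots> \<le> (2 * pi * th k) * (s * real (a k))"
    proof -
      have "real M' < real (a (Suc k))" using k unfolding M'_def by simp
      also have "\<dots> < s * real (a k)" using grow k by simp
      finally have "real M' \<le> s * real (a k)" by simp
      moreover have "0 \<le> 2 * pi * th k" by (simp add: th_def dist_int_nonneg)
      ultimately show ?thesis by (simp add: mult_left_mono)
    qed
    also have "\<dots> = (2 * pi * s * th k) * real (a k)" by (simp add: mult_ac)
    also have "\<dots> \<le> \<epsilon> * real (a k)" using H[OF kK] by (intro mult_right_mono) auto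
    finally have n3: "norm ((ph - 1) * z * of_nat M') \<le> \<epsilon> * real (a k)" .
    have "norm (F M - z * of_nat M) \<le> \<epsilon> * real (a k) + (2 * real (a K) + 2 * \<epsilon> * real M') + \<epsilon> * real (a k)"
      unfolding eq using n1 n2 n3 by (meson add_mono order_trans norm_triangle_ineq)
    also have "\<dots> = 2 * real (a K) + 2 * \<epsilon> * real M" unfolding MM by (simp add: algebra_simps)
    finally show ?thesis .
  qed
qed

theorem F_avg_conv: "\<exists>z. (\<lambda>n. F n / of_nat n) \<longlonglongrightarrow> z"
proof -
  obtain z where z: "X \<longlonglongrightarrow> z" using X_conv by (auto simp: convergent_def)
  have z1: "norm z \<le> 1"
    using tendsto_norm[OF z] norm_X by (intro LIMSEQ_le_const2) auto
  have th0: "th \<longlonglongrightarrow> 0" using thsum unfolding th_def[abs_def] by (rule summable_LIMSEQ_zero)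
  have "(\<lambda>n. F n / of_nat n) \<longlonglongrightarrow> z"
  proof (rule LIMSEQ_I)
    fix r :: real assume r: "0 < r"
    define \<epsilon> where "\<epsilon> = r / 4"
    have e0: "0 < \<epsilon>" using r by (simp add: \<epsilon>_def)
    obtain K1 where K1: "\<And>k. k \<ge> K1 \<Longrightarrow> norm (X k - z) < \<epsilon>" using LIMSEQ_D[OF z e0] by blast
    have sp: "0 < 2 * pi * s" using s1 by simp
    obtain K2 where K2: "\<And>k. k \<ge> K2 \<Longrightarrow> norm (th k - 0) < \<epsilon> / (2 * pi * s)"
      using LIMSEQ_D[OF th0, of "\<epsilon> / (2 * pi * s)"] e0 sp by auto
    define K where "K = max 1 (max K1 K2)"
    have H: "norm (X k - z) \<le> \<epsilon> \<and> 2 * pi * s * th k \<le> \<epsilon>" if "k \<ge> K" for k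
    proof
      show "norm (X k - z) \<le> \<epsilon>" using K1[of k] that by (simp add: K_def)
      have "\<bar>th k\<bar> < \<epsilon> / (2 * pi * s)" using K2[of k] that by (simp add: K_def)
      then have "\<bar>th k\<bar> * (2 * pi * s) < \<epsilon>" using sp by (simp add: pos_less_divide_eq)
      moreover have "th k * (2 * pi * s) \<le> \<bar>th k\<bar> * (2 * pi * s)" using sp by (intro mult_right_mono) auto
      ultimately have "th k * (2 * pi * s) < \<epsilon>" by linarith
      then show "2 * pi * s * th k \<le> \<epsilon>" by (simp add: mult_ac)
    qed
    have K1': "K \<ge> 1" by (simp add: K_def)
    define N0 where "N0 = nat (ceiling (2 * real (a K) / \<epsilon>)) + 1"
    show "\<exists>no. \<forall>n\<ge>no. norm (F n / of_nat n - z) < r"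
    proof (intro exI allI impI)
      fix n assume n: "n \<ge> N0"
      have n0: "0 < real n" using n by (simp add: N0_def)
      have "2 * real (a K) / \<epsilon> < real n"
      proof -
        have "2 * real (a K) / \<epsilon> \<le> real (nat (ceiling (2 * real (a K) / \<epsilon>)))" by linarith
        then show ?thesis using n unfolding N0_def by linarith
      qed
      then have aK: "2 * real (a K) < \<epsilon> * real n" using e0 by (simp add: field_simps)
      have "F n / of_nat n - z = (F n - z * of_nat n) / of_nat n" using n0 by (simp add: field_simps)
      then have "norm (F n / of_nat n - z) = norm (F n - z * of_nat n) / real n"
        by (simp add: norm_divide)
      also have "\<dots> \<le> (2 * real (a K) + 2 * \<epsilon> * real n) / real n"
        using E_bound[OF K1' _ z1 H, of n] e0 n0 by (intro divide_right_mono) auto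
      also have "\<dots> < (\<epsilon> * real n + 2 * \<epsilon> * real n) / real n"
        using aK n0 by (intro divide_strict_right_mono) auto
      also have "\<dots> = 3 * \<epsilon>" using n0 by (simp add: field_simps)
      also have "\<dots> < r" using r by (simp add: \<epsilon>_def)
      finally show "norm (F n / of_nat n - z) < r" .
    qed
  qed
  then show ?thesis by blast
qed

end

theorem mainTheorem5:
  fixes a :: "nat \<Rightarrow> nat" and b :: "nat \<Rightarrow> int" and \<alpha> :: real
  assumes "mild_signature a"
    and "summable (\<lambda>i. dist_int (\<alpha> * of_int (b (Suc i))))"
  shows "\<exists>z::complex. (\<lambda>n. (\<Sum>i<n. ee (\<alpha> * of_int (replacement a b i))) / of_nat n)
            \<longlonglongrightarrow> z"
proof -
  obtain L r s where A: "a 1 = 1" "strict_mono_on {1..} a"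
    and W: "\<forall>n\<ge>2. set (greedy_list a (n - 1) (a n)) \<subseteq> {n - L..n - 1}"
    and S: "s > 1" "\<forall>n\<ge>1. r * real (a n) < real (a (Suc n)) \<and> real (a (Suc n)) < s * real (a n)"
    using assms(1) unfolding mild_signature_def by blast
  have sm: "summable (\<lambda>k. dist_int (\<alpha> * of_int (b k)))"
    using assms(2) by (subst summable_Suc_iff[symmetric])
  interpret m: mild a b \<alpha> L s
  proof
    show "a 1 = 1" "strict_mono_on {1..} a" by (rule A(1), rule A(2))
  next
    fix n :: nat assume "n \<ge> 2" then show "set (greedy_list a (n - 1) (a n)) \<subseteq> {n - L..n - 1}" using W by blast
  next
    show "s > 1" by (rule S(1))
  next
    fix n :: nat assume "n \<ge> 1" then show "real (a (Suc n)) < s * real (a n)" using S(2) by blast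
  next
    show "summable (\<lambda>k. dist_int (\<alpha> * of_int (b k)))" by (rule sm)
  qed
  show ?thesis using m.F_avg_conv unfolding m.F_def m.f_def .
qed



end
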